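(* Let $\lambda\in\hat U(N)$ be a signature and $q\in\mathbb{R}$. Then \[ m_{N,PP(q)}[\lambda]=\frac1N\sum_{i=1}^N\Big(\prod_{j\ne i}\frac{(\lambda_i-i)-(\lambda_j-j)-q}{(\lambda_i-i)-(\lambda_j-j)}\Big)\delta\Big(\frac{\lambda_i+N-i}{N}\Big) \] is a signed measure of total mass $1$, and for $q\in[-1,1]$ it is a probability measure.
   Context: A signature of length $N$ is a tuple $\lambda=(\lambda_1\ge\dots\ge\lambda_N)\in\mathbb{Z}^N$; $\hat U(N)$ is the set of such signatures. $\delta(x)$ denotes the Dirac measure at $x$. *)

theory Defs
  imports "HOL-Probability.Probability"
begin

text \<open>A signature of length N: a non-increasing integer tuple
  (lambda_1 >= ... >= lambda_N), encoded as a function on the indices 1..N.\<close>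
definition signature :: "nat \<Rightarrow> (nat \<Rightarrow> int) \<Rightarrow> bool" where
  "signature N lam \<longleftrightarrow> (\<forall>i j. 1 \<le> i \<and> i \<le> j \<and> j \<le> N \<longrightarrow> lam j \<le> lam i)"

definition shifted :: "(nat \<Rightarrow> int) \<Rightarrow> nat \<Rightarrow> real" where
  "shifted lam i = real_of_int (lam i) - real i"

definition pp_weight :: "nat \<Rightarrow> real \<Rightarrow> (nat \<Rightarrow> int) \<Rightarrow> nat \<Rightarrow> real" where
  "pp_weight N q lam i =
     (\<Prod>j\<in>{1..N} - {i}. (shifted lam i - shifted lam j - q) / (shifted lam i - shifted lam j))"

definition pp_atom :: "nat \<Rightarrow> (nat \<Rightarrow> int) \<Rightarrow> nat \<Rightarrow> real" where
  "pp_atom N lam i = (real_of_int (lam i) + real N - real i) / real N"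

definition m_PP :: "nat \<Rightarrow> real \<Rightarrow> (nat \<Rightarrow> int) \<Rightarrow> real set \<Rightarrow> real" where
  "m_PP N q lam A = (1 / real N) * (\<Sum>i=1..N. pp_weight N q lam i * indicator A (pp_atom N lam i))"

end

theory Submission
  imports Defs
begin

definition DD :: "(nat \<Rightarrow> real) \<Rightarrow> nat set \<Rightarrow> (real \<Rightarrow> real) \<Rightarrow> real" where
  "DD x S f = (\<Sum>i\<in>S. f (x i) / (\<Prod>j\<in>S-{i}. x i - x j))"

lemma DD_lin: "DD x S (\<lambda>z. c * f z + d * g z) = c * DD x S f + d * DD x S g"
  unfolding DD_def by (simp add: sum.distrib sum_distrib_left add_divide_distrib)

lemma DD_K1:
  assumes "finite S" "inj_on x S" "a \<in> S"
  shows "DD x S (\<lambda>z. (z - x a) * f z) = DD x (S-{a}) f"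
proof -
  have "DD x S (\<lambda>z. (z - x a) * f z) =
     (x a - x a) * f (x a) / (\<Prod>j\<in>S-{a}. x a - x j) +
     (\<Sum>i\<in>S-{a}. (x i - x a) * f (x i) / (\<Prod>j\<in>S-{i}. x i - x j))"
    unfolding DD_def using assms by (simp add: sum.remove)
  also have "\<dots> = (\<Sum>i\<in>S-{a}. f (x i) / (\<Prod>j\<in>S-{a}-{i}. x i - x j))"
  proof (simp, rule sum.cong, simp)
    fix i assume i: "i \<in> S-{a}"
    have ne: "x i - x a \<noteq> 0" using i assms inj_onD[OF assms(2)] by force
    have "(\<Prod>j\<in>S-{i}. x i - x j) = (x i - x a) * (\<Prod>j\<in>S-{i}-{a}. x i - x j)"
      using i assms by (subst prod.remove[of _ a]) auto
    moreover have "S-{i}-{a} = S-{a}-{i}" by auto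
    ultimately show "(x i - x a) * f (x i) / (\<Prod>j\<in>S-{i}. x i - x j) =
       f (x i) / (\<Prod>j\<in>S-{a}-{i}. x i - x j)" using ne by simp
  qed
  finally show ?thesis unfolding DD_def .
qed

lemma DD_one:
  assumes "finite S" "inj_on x S"
  shows "DD x S (\<lambda>z. 1) = (if card S = 1 then 1 else 0)"
  using assms
proof (induction "card S" arbitrary: S rule: less_induct)
  case less
  show ?case
  proof (cases "card S \<le> 1")
    case True
    then consider "card S = 0" | "card S = 1" by linarith
    then show ?thesis
    proof cases
      case 1 then have "S = {}" using less by simp
      then show ?thesis by (simp add: DD_def)
    next
      case 2 then obtain a where "S = {a}" using card_1_singletonE by blast
      then show ?thesis by (simp add: DD_def)
    qed
  next
    case False
    then obtain a b where ab: "a \<in> S" "b \<in> S" "a \<noteq> b"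
    proof -
      from False less(2) have "\<not> (\<forall>a1\<in>S. \<forall>a2\<in>S. a1 = a2)"
        by (simp add: card_le_Suc0_iff_eq)
      then show ?thesis using that by blast
    qed
    have xab: "x b - x a \<noteq> 0" using ab less(3) inj_onD by fastforce
    have ca: "card (S-{a}) < card S" "card (S-{b}) < card S"
      using card_Diff1_less[OF less(2) ab(1)] card_Diff1_less[OF less(2) ab(2)] by auto
    have ceq: "card (S-{a}) = card (S-{b})" using ab less(2) by simp
    have ia: "inj_on x (S-{a})" "inj_on x (S-{b})" using less(3) inj_on_diff by auto
    have "DD x S (\<lambda>z. (z - x a) * 1) = DD x (S-{a}) (\<lambda>z. 1)"
      using DD_K1[OF less(2,3) ab(1)] .
    moreover have "DD x S (\<lambda>z. (z - x b) * 1) = DD x (S-{b}) (\<lambda>z. 1)"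
      using DD_K1[OF less(2,3) ab(2)] .
    moreover have "DD x (S-{a}) (\<lambda>z. 1) = DD x (S-{b}) (\<lambda>z. 1)"
      using less(1)[OF ca(1) _ ia(1)] less(1)[OF ca(2) _ ia(2)] ceq less(2) by simp
    moreover have "DD x S (\<lambda>z. 1 * ((z - x a) * 1) + (-1) * ((z - x b) * 1))
        = DD x S (\<lambda>z. (x b - x a) * 1 + 0 * 1)"
      by (rule arg_cong[where f="DD x S"]) (auto simp: algebra_simps)
    ultimately have "(x b - x a) * DD x S (\<lambda>z. 1) = 0"
      by (simp only: DD_lin)
    then show ?thesis using xab False by simp
  qed
qed

lemma DD_prod:
  assumes "finite S" "inj_on x S" "k \<le> card S"
  shows "DD x S (\<lambda>z. \<Prod>m<k. z - c m) =
    (if k+1 < card S then 0 else if k+1 = card S then 1 else (\<Sum>i\<in>S. x i) - (\<Sum>m<k. c m))"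
  using assms
proof (induction k arbitrary: S)
  case 0
  have "S = {} \<or> card S \<ge> 1" using 0(1) by (auto simp: Suc_le_eq card_gt_0_iff)
  then show ?case using DD_one[OF 0(1,2)] by (auto simp: DD_def)
next
  case (Suc k)
  have "S \<noteq> {}" using Suc(4) by auto
  then obtain a where a: "a \<in> S" by blast
  have fa: "finite (S-{a})" "inj_on x (S-{a})" "k \<le> card (S-{a})"
    using Suc(2,4) a inj_on_diff[OF Suc(3)] by auto
  have c: "card (S-{a}) = card S - 1" using a Suc(2) by simp
  have "DD x S (\<lambda>z. \<Prod>m<Suc k. z - c m) =
     DD x S (\<lambda>z. 1 * ((z - x a) * (\<Prod>m<k. z - c m)) + (x a - c k) * (\<Prod>m<k. z - c m))"
    by (rule arg_cong[where f="DD x S"], rule ext) (simp add: algebra_simps)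
  also have "\<dots> = DD x (S-{a}) (\<lambda>z. \<Prod>m<k. z - c m) + (x a - c k) * DD x S (\<lambda>z. \<Prod>m<k. z - c m)"
    by (simp only: DD_lin DD_K1[OF Suc(2,3) a])
  also have "\<dots> = (if Suc k+1 < card S then 0 else if Suc k + 1 = card S then 1
      else (\<Sum>i\<in>S. x i) - (\<Sum>m<Suc k. c m))"
  proof -
    note I1 = Suc.IH[OF fa] and I2 = Suc.IH[OF Suc(2,3)]
    have sr: "(\<Sum>i\<in>S. x i) = x a + (\<Sum>i\<in>S-{a}. x i)" using sum.remove[OF Suc(2) a, of x] .
    consider "Suc k + 1 < card S" | "Suc k + 1 = card S" | "Suc k = card S" using Suc(4) by linarith
    then show ?thesis
    proof cases
      case 1
      then have "k+1 < card (S-{a})" "k+1 < card S" using c by auto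
      then show ?thesis using I1 I2 1 by simp
    next
      case 2
      then have "k+1 = card (S-{a})" "k+1 < card S" using c by auto
      then show ?thesis using I1 I2 2 by simp
    next
      case 3
      then have h: "\<not> k+1 < card (S-{a})" "k+1 \<noteq> card (S-{a})" "k+1 = card S" using c by auto
      have e1: "DD x (S-{a}) (\<lambda>z. \<Prod>m<k. z - c m) = (\<Sum>i\<in>S-{a}. x i) - (\<Sum>m<k. c m)"
        using I1 h(1,2) by simp
      have e2: "DD x S (\<lambda>z. \<Prod>m<k. z - c m) = 1" using I2 h(3) by simp
      have h2: "\<not> Suc k + 1 < card S" "Suc k + 1 \<noteq> card S" using 3 by auto
      show ?thesis unfolding e1 e2 sr using h2 by simp
    qed
  qed
  finally show ?case .
qed

lemma shifted_inj:
  assumes "signature N lam"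
  shows "inj_on (shifted lam) {1..N}"
proof (rule inj_onI)
  fix i j assume ij: "i \<in> {1..N}" "j \<in> {1..N}" "shifted lam i = shifted lam j"
  show "i = j"
  proof (rule ccontr)
    assume "i \<noteq> j"
    then consider "i < j" | "j < i" by linarith
    then show False
    proof cases
      case 1 then have "lam j \<le> lam i" using assms ij unfolding signature_def by auto
      then show False using 1 ij(3) unfolding shifted_def by linarith
    next
      case 2 then have "lam i \<le> lam j" using assms ij unfolding signature_def by auto
      then show False using 2 ij(3) unfolding shifted_def by linarith
    qed
  qed
qed

lemma weight_sum:
  assumes "N \<ge> 1" "signature N lam"
  shows "(\<Sum>i=1..N. pp_weight N q lam i) = real N"
proof (cases "q = 0")
  case True
  have "pp_weight N q lam i = 1" if "i \<in> {1..N}" for i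
    unfolding pp_weight_def True
  proof (rule prod.neutral, rule ballI)
    fix j assume j: "j \<in> {1..N} - {i}"
    have "shifted lam i \<noteq> shifted lam j"
      using shifted_inj[OF assms(2)] j that unfolding inj_on_def by blast
    then show "(shifted lam i - shifted lam j - 0) / (shifted lam i - shifted lam j) = 1" by simp
  qed
  then show ?thesis by simp
next
  case False
  define x where "x = shifted lam"
  have inj: "inj_on x {1..N}" using shifted_inj[OF assms(2)] x_def by simp
  define c where "c m = x (Suc m) + q" for m
  have pr: "(\<Prod>m<N. z - c m) = (\<Prod>j\<in>{1..N}. z - x j - q)" for z
  proof -
    have "(\<Prod>j\<in>{1..N}. z - x j - q) = (\<Prod>m\<in>{0..<N}. z - x (Suc m) - q)"
      by (rule prod.reindex_bij_witness[where i=Suc and j="\<lambda>j. j - 1"]) auto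
    then show ?thesis unfolding c_def by (simp add: lessThan_atLeast0 algebra_simps)
  qed
  have sc: "(\<Sum>m<N. c m) = (\<Sum>j\<in>{1..N}. x j) + real N * q"
  proof -
    have "(\<Sum>j\<in>{1..N}. x j) = (\<Sum>m\<in>{0..<N}. x (Suc m))"
      by (rule sum.reindex_bij_witness[where i=Suc and j="\<lambda>j. j - 1"]) auto
    then show ?thesis unfolding c_def by (simp add: sum.distrib lessThan_atLeast0)
  qed
  have "DD x {1..N} (\<lambda>z. \<Prod>m<N. z - c m) = - (real N * q)"
    using DD_prod[OF _ inj, of N c] sc by simp
  moreover have "DD x {1..N} (\<lambda>z. \<Prod>m<N. z - c m) = (-q) * (\<Sum>i=1..N. pp_weight N q lam i)"
    unfolding DD_def pr sum_distrib_left
  proof (rule sum.cong, simp)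
    fix i assume i: "i \<in> {1..N}"
    have "(\<Prod>j\<in>{1..N}. x i - x j - q) = (x i - x i - q) * (\<Prod>j\<in>{1..N}-{i}. x i - x j - q)"
      using i by (subst prod.remove[of _ i]) auto
    then show "(\<Prod>j\<in>{1..N}. x i - x j - q) / (\<Prod>j\<in>{1..N} - {i}. x i - x j) =
         - q * pp_weight N q lam i"
      unfolding pp_weight_def x_def by (simp add: prod_dividef)
  qed
  ultimately show ?thesis using False by simp
qed

lemma weight_nonneg:
  assumes "signature N lam" "q \<in> {-1..1}" "i \<in> {1..N}"
  shows "0 \<le> pp_weight N q lam i"
  unfolding pp_weight_def
proof (rule prod_nonneg)
  fix j assume j: "j \<in> {1..N} - {i}"
  define d where "d = lam i - int i - (lam j - int j)"
  have e: "shifted lam i - shifted lam j = real_of_int d" unfolding d_def shifted_def by simp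
  have "shifted lam i \<noteq> shifted lam j"
    using inj_onD[OF shifted_inj[OF assms(1)], of i j] j assms(3) by blast
  then have "d \<noteq> 0" using e by auto
  show "0 \<le> (shifted lam i - shifted lam j - q) / (shifted lam i - shifted lam j)"
  proof (cases "d > 0")
    case True
    then have "real_of_int d \<ge> 1" by linarith
    then show ?thesis unfolding e using assms(2) by (intro divide_nonneg_pos) auto
  next
    case False
    then have "real_of_int d \<le> -1" using \<open>d \<noteq> 0\<close> by linarith
    then show ?thesis unfolding e using assms(2) by (intro divide_nonpos_neg) auto
  qed
qed

theorem mainTheorem3:
  fixes N :: nat and lam :: "nat \<Rightarrow> int" and q :: real
  assumes "N \<ge> 1" and "signature N lam"
  shows "m_PP N q lam UNIV = 1 \<and>
         (q \<in> {-1..1} \<longrightarrow>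
           (\<forall>A. 0 \<le> m_PP N q lam A) \<and>
           prob_space (measure_of UNIV UNIV (\<lambda>A. ennreal (m_PP N q lam A))))"
proof (intro conjI impI)
  show one: "m_PP N q lam UNIV = 1"
    unfolding m_PP_def using weight_sum[OF assms] assms(1) by simp
  assume q: "q \<in> {-1..1}"
  define w where "w i = pp_weight N q lam i / real N" for i
  have w0: "i \<in> {1..N} \<Longrightarrow> 0 \<le> w i" for i
    unfolding w_def using weight_nonneg[OF assms(2) q] by simp
  have mw: "m_PP N q lam A = (\<Sum>i=1..N. w i * indicator A (pp_atom N lam i))" for A
    unfolding m_PP_def w_def sum_distrib_left by (rule sum.cong) auto
  show nn: "\<forall>A. 0 \<le> m_PP N q lam A"
    unfolding mw using w0 by (auto intro!: sum_nonneg)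
  have me: "ennreal (m_PP N q lam A) = (\<Sum>i=1..N. ennreal (w i) * indicator A (pp_atom N lam i))" for A
  proof -
    have "ennreal (m_PP N q lam A) = (\<Sum>i\<in>{1..N}. ennreal (w i * indicator A (pp_atom N lam i)))"
      unfolding mw by (rule sum_ennreal[symmetric]) (use w0 in auto)
    also have "\<dots> = (\<Sum>i=1..N. ennreal (w i) * indicator A (pp_atom N lam i))"
      by (rule sum.cong) (auto simp: indicator_def)
    finally show ?thesis .
  qed
  have ca: "countably_additive UNIV (\<lambda>A. ennreal (m_PP N q lam A))"
  proof (rule countably_additiveI)
    fix A :: "nat \<Rightarrow> real set" assume d: "disjoint_family A"
    have "(\<Sum>n. ennreal (m_PP N q lam (A n))) =
        (\<Sum>i=1..N. \<Sum>n. ennreal (w i) * indicator (A n) (pp_atom N lam i))"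
      unfolding me by (rule suminf_sum) (rule summableI)
    also have "\<dots> = (\<Sum>i=1..N. ennreal (w i) * indicator (\<Union>n. A n) (pp_atom N lam i))"
      by (simp add: ennreal_suminf_cmult suminf_indicator[OF d])
    finally show "(\<Sum>n. ennreal (m_PP N q lam (A n))) = ennreal (m_PP N q lam (\<Union>n. A n))"
      unfolding me .
  qed
  have pos: "positive UNIV (\<lambda>A. ennreal (m_PP N q lam A))"
    unfolding positive_def m_PP_def by simp
  have sa: "sigma_algebra (UNIV::real set) UNIV"
    using sigma_algebra_Pow[of "UNIV::real set"] by simp
  show "prob_space (measure_of UNIV UNIV (\<lambda>A. ennreal (m_PP N q lam A)))"
    by (rule prob_spaceI)
      (simp add: space_measure_of_conv emeasure_measure_of_sigma[OF sa pos ca] one)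
qed

end
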